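(* Let $G = (X\dot\cup Y,E)$ be a $k$-regular bipartite graph on $2n$ vertices, let $c>0$, and let $(S_1,T_1)$ and $(S_2,T_2)$ be two $c$-internal cuts. Then $d((S_1,T_1),(S_2,T_2)) \le \frac{40cn}{\log n}$ or $d((S_1,T_1),(S_2,T_2)) \ge k/10$.
   Context: A cut in $G$ is a pair $(S,T)$ with $S\subseteq X$, $T\subseteq Y$; write $S^c = X\setminus S$, $T^c=Y\setminus T$. The cross edges with respect to $(S,T)$ are the edges joining $S$ to $T^c$ or $S^c$ to $T$. A cut is $c$-internal if it has at most $4cnk/\log n$ cross edges. $d((S_1,T_1),(S_2,T_2)) = |S_1\setminus S_2|+|S_2\setminus S_1|+|T_1\setminus T_2|+|T_2\setminus T_1|$. $\log$ is the natural logarithm. *)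

theory Defs
  imports Complex_Main
begin

text \<open>A bipartite graph with (disjoint) parts X and Y is given by an edge set
  E \<subseteq> X \<times> Y; the pair (x,y) stands for the edge joining x and y.\<close>

definition k_regular_bipartite :: "'a set \<Rightarrow> 'a set \<Rightarrow> ('a \<times> 'a) set \<Rightarrow> nat \<Rightarrow> bool" where
  "k_regular_bipartite X Y E k \<longleftrightarrow>
     finite X \<and> finite Y \<and> X \<inter> Y = {} \<and> E \<subseteq> X \<times> Y \<and>
     (\<forall>x\<in>X. card {y. (x, y) \<in> E} = k) \<and>
     (\<forall>y\<in>Y. card {x. (x, y) \<in> E} = k)"

definition is_cut :: "'a set \<Rightarrow> 'a set \<Rightarrow> 'a set \<Rightarrow> 'a set \<Rightarrow> bool" where
  "is_cut X Y S T \<longleftrightarrow> S \<subseteq> X \<and> T \<subseteq> Y"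

definition cross_edges :: "'a set \<Rightarrow> 'a set \<Rightarrow> ('a \<times> 'a) set \<Rightarrow> 'a set \<Rightarrow> 'a set \<Rightarrow> ('a \<times> 'a) set" where
  "cross_edges X Y E S T =
     {(x, y) \<in> E. (x \<in> S \<and> y \<in> Y - T) \<or> (x \<in> X - S \<and> y \<in> T)}"

definition c_internal :: "real \<Rightarrow> nat \<Rightarrow> nat \<Rightarrow> 'a set \<Rightarrow> 'a set \<Rightarrow> ('a \<times> 'a) set \<Rightarrow> 'a set \<Rightarrow> 'a set \<Rightarrow> bool" where
  "c_internal c n k X Y E S T \<longleftrightarrow>
     is_cut X Y S T \<and>
     real (card (cross_edges X Y E S T)) \<le> 4 * c * real n * real k / ln (real n)"

definition cut_dist :: "'a set \<Rightarrow> 'a set \<Rightarrow> 'a set \<Rightarrow> 'a set \<Rightarrow> nat" where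
  "cut_dist S1 T1 S2 T2 =
     card (S1 - S2) + card (S2 - S1) + card (T1 - T2) + card (T2 - T1)"

end

theory Submission
  imports Defs
begin

theorem claim2p6:
  fixes X Y :: "'a set" and E :: "('a \<times> 'a) set" and n k :: nat and c :: real
    and S1 T1 S2 T2 :: "'a set"
  assumes "k_regular_bipartite X Y E k"
    and "card X + card Y = 2 * n"
    and "c > 0"
    and "c_internal c n k X Y E S1 T1"
    and "c_internal c n k X Y E S2 T2"
  shows "real (cut_dist S1 T1 S2 T2) \<le> 40 * c * real n / ln (real n)
         \<or> real (cut_dist S1 T1 S2 T2) \<ge> real k / 10"
proof -
  have fX: "finite X" and fY: "finite Y" and EXY: "E \<subseteq> X \<times> Y"
    and degX: "\<And>x. x \<in> X \<Longrightarrow> card {y. (x, y) \<in> E} = k"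
    and degY: "\<And>y. y \<in> Y \<Longrightarrow> card {x. (x, y) \<in> E} = k"
    using assms(1) unfolding k_regular_bipartite_def by auto
  have fE: "finite E" using EXY fX fY finite_subset by blast
  have S1X: "S1 \<subseteq> X" and T1Y: "T1 \<subseteq> Y" and S2X: "S2 \<subseteq> X" and T2Y: "T2 \<subseteq> Y"
    using assms(4,5) unfolding c_internal_def is_cut_def by auto
  define C1 where "C1 = cross_edges X Y E S1 T1"
  define C2 where "C2 = cross_edges X Y E S2 T2"
  define L where "L = 4 * c * real n * real k / ln (real n)"
  have C1L: "real (card C1) \<le> L" using assms(4) unfolding C1_def L_def c_internal_def by auto
  have C2L: "real (card C2) \<le> L" using assms(5) unfolding C2_def L_def c_internal_def by auto
  have fC1: "finite C1" unfolding C1_def cross_edges_def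
    by (rule finite_subset[OF _ fE]) auto
  have fC2: "finite C2" unfolding C2_def cross_edges_def
    by (rule finite_subset[OF _ fE]) auto
  define A where "A = (S1 - S2) \<union> (S2 - S1)"
  define B where "B = (T1 - T2) \<union> (T2 - T1)"
  have fA: "finite A" unfolding A_def using S1X S2X fX finite_subset by blast
  have fB: "finite B" unfolding B_def using T1Y T2Y fY finite_subset by blast
  have AX: "A \<subseteq> X" unfolding A_def using S1X S2X by blast
  have BY: "B \<subseteq> Y" unfolding B_def using T1Y T2Y by blast
  have cA: "card A = card (S1 - S2) + card (S2 - S1)" unfolding A_def
    by (rule card_Un_disjoint) (use S1X S2X fX in \<open>auto intro: finite_subset\<close>)
  have cB: "card B = card (T1 - T2) + card (T2 - T1)" unfolding B_def
    by (rule card_Un_disjoint) (use T1Y T2Y fY in \<open>auto intro: finite_subset\<close>)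
  define d where "d = cut_dist S1 T1 S2 T2"
  have dAB: "d = card A + card B" unfolding d_def cut_dist_def cA cB by simp
  define P where "P = Sigma A (\<lambda>x. {y. (x, y) \<in> E} - B)"
  define Q where "Q = (\<lambda>(y, x). (x, y)) ` Sigma B (\<lambda>y. {x. (x, y) \<in> E} - A)"
  have PC: "P \<subseteq> C1 \<union> C2"
  proof
    fix p assume "p \<in> P"
    then obtain x y where p: "p = (x, y)" "x \<in> A" "(x, y) \<in> E" "y \<notin> B"
      unfolding P_def by auto
    then have "x \<in> X" "y \<in> Y" using EXY by auto
    then show "p \<in> C1 \<union> C2" using p unfolding C1_def C2_def cross_edges_def A_def B_def
      by auto
  qed
  have QC: "Q \<subseteq> C1 \<union> C2"
  proof
    fix p assume "p \<in> Q"
    then obtain x y where p: "p = (x, y)" "y \<in> B" "(x, y) \<in> E" "x \<notin> A"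
      unfolding Q_def by auto
    then have "x \<in> X" "y \<in> Y" using EXY by auto
    then show "p \<in> C1 \<union> C2" using p unfolding C1_def C2_def cross_edges_def A_def B_def
      by auto
  qed
  have PQ: "P \<inter> Q = {}" unfolding P_def Q_def by auto
  have fP: "finite P" using PC fC1 fC2 finite_subset by blast
  have fQ: "finite Q" using QC fC1 fC2 finite_subset by blast
  have cP: "card P \<ge> card A * (k - card B)"
  proof -
    have "card P = (\<Sum>x\<in>A. card ({y. (x, y) \<in> E} - B))"
      unfolding P_def
      by (rule card_SigmaI[OF fA]) (use EXY fY in \<open>auto intro: finite_subset\<close>)
    also have "\<dots> \<ge> (\<Sum>x\<in>A. k - card B)"
    proof (rule sum_mono)
      fix x assume "x \<in> A"
      then have "card {y. (x, y) \<in> E} = k" using degX AX by auto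
      then show "k - card B \<le> card ({y. (x, y) \<in> E} - B)"
        using diff_card_le_card_Diff[OF fB, of "{y. (x, y) \<in> E}"] by simp
    qed
    finally show ?thesis by simp
  qed
  have cQ: "card Q \<ge> card B * (k - card A)"
  proof -
    have "card Q = card (Sigma B (\<lambda>y. {x. (x, y) \<in> E} - A))"
      unfolding Q_def by (rule card_image) (auto simp: inj_on_def)
    also have "\<dots> = (\<Sum>y\<in>B. card ({x. (x, y) \<in> E} - A))"
      by (rule card_SigmaI[OF fB]) (use EXY fX in \<open>auto intro: finite_subset\<close>)
    also have "\<dots> \<ge> (\<Sum>y\<in>B. k - card A)"
    proof (rule sum_mono)
      fix y assume "y \<in> B"
      then have "card {x. (x, y) \<in> E} = k" using degY BY by auto
      then show "k - card A \<le> card ({x. (x, y) \<in> E} - A)"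
        using diff_card_le_card_Diff[OF fA, of "{x. (x, y) \<in> E}"] by simp
    qed
    finally show ?thesis by simp
  qed
  have "card P + card Q = card (P \<union> Q)" using card_Un_disjoint[OF fP fQ PQ] by simp
  also have "\<dots> \<le> card (C1 \<union> C2)" using PC QC fC1 fC2 by (intro card_mono) auto
  also have "\<dots> \<le> card C1 + card C2" by (rule card_Un_le)
  finally have PQC: "card P + card Q \<le> card C1 + card C2" .
  have ln0: "ln (real n) \<ge> 0" by (cases "n = 0") auto
  show ?thesis unfolding d_def[symmetric]
  proof (rule ccontr)
    assume H: "\<not> (real d \<le> 40 * c * real n / ln (real n) \<or> real d \<ge> real k / 10)"
    then have dk: "real d < real k / 10" by auto
    have ca: "card A \<le> k" "card B \<le> k" using dk dAB by auto
    have "real (card A) * (real k - real (card B)) + real (card B) * (real k - real (card A))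
          \<le> real (card P + card Q)"
    proof -
      have "real (card A * (k - card B)) \<le> real (card P)" using cP by linarith
      moreover have "real (card B * (k - card A)) \<le> real (card Q)" using cQ by linarith
      ultimately show ?thesis using ca by (simp add: of_nat_diff)
    qed
    also have "\<dots> \<le> 2 * L" using PQC C1L C2L by linarith
    finally have key: "real (card A) * (real k - real (card B)) + real (card B) * (real k - real (card A)) \<le> 2 * L" .
    have "real d * (real k - real d) \<le> real (card A) * (real k - real (card B)) + real (card B) * (real k - real (card A))"
      unfolding dAB by (simp add: algebra_simps)
    moreover have "real d * (9 * real k / 10) \<le> real d * (real k - real d)"
      using dk by (intro mult_left_mono) auto
    ultimately have "real d * (9 * real k / 10) \<le> 2 * L" using key by linarith
    define M where "M = 8 * c * real n / ln (real n)"
    have M0: "M \<ge> 0" unfolding M_def using assms(3) ln0 by simp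
    have "2 * L = M * real k" unfolding L_def M_def by simp
    then have k9: "(real d * 9 / 10) * real k \<le> M * real k"
      using \<open>real d * (9 * real k / 10) \<le> 2 * L\<close> by simp
    have kpos: "real k > 0" using H by (cases "k = 0") auto
    have "real d * 9 / 10 \<le> M" using mult_right_le_imp_le[OF k9 kpos] .
    moreover have "M * 5 = 40 * c * real n / ln (real n)" unfolding M_def by simp
    ultimately have "real d \<le> 40 * c * real n / ln (real n)" using M0 by linarith
    then show False using H by simp
  qed
qed

end
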